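(* The hereditary class property "nowhere dense" (the set of hereditary nowhere dense classes) is a decomposition horizon.
   Context: Graphs are finite and simple. For a graph $H$ and integer $p\ge0$, $H^{(p)}$ is obtained by replacing each edge of $H$ by a path of length $p+1$. A class $\mathscr C$ is nowhere dense if there is a function $f_\omega:\mathbb N\to\mathbb N$ such that whenever $H^{(p)}$ is a subgraph of a graph in $\mathscr C$, the clique number of $H$ is at most $f_\omega(p)$. A hereditary class is a class closed under isomorphism and induced subgraphs; a hereditary class property is a set $\Pi$ of hereditary classes closed under passing to hereditary subclasses. For non-decreasing $f$ and positive integer $p$, $\mathscr C$ has an $f$-bounded $\Pi$-decomposition with parameter $p$ if there is $\mathscr D_p\in\Pi$ such that every $G\in\mathscr C$ has a partition $V_1,\dots,V_N$ of $V(G)$, $N\le f(|G|)$, with $G[V_{i_1}\cup\dots\cup V_{i_p}]\in\mathscr D_p$ for all $i_1,\dots,i_p\in[N]$. $\Pi^\ast$ is the set of hereditary classes that, for every positive integer $p$, have such a decomposition for some non-decreasing $f$ with $f(n)=n^{o(1)}$. $\Pi$ is a decomposition horizon if $\Pi^\ast=\Pi$. *)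

theory Defs
  imports Complex_Main
begin

text \<open>Classes of graphs are sets of graphs on vertex type nat
  (every finite graph is isomorphic to one of these).\<close>

type_synonym 'v graph = "'v set \<times> 'v set set"

definition verts :: "'v graph \<Rightarrow> 'v set" where "verts G = fst G"
definition edges :: "'v graph \<Rightarrow> 'v set set" where "edges G = snd G"

definition wf_graph :: "'v graph \<Rightarrow> bool" where
  "wf_graph G \<longleftrightarrow> finite (verts G) \<and> (\<forall>e\<in>edges G. e \<subseteq> verts G \<and> card e = 2)"

definition graph_iso :: "'v graph \<Rightarrow> 'w graph \<Rightarrow> bool" where
  "graph_iso G H \<longleftrightarrow> (\<exists>f. bij_betw f (verts G) (verts H) \<and>
     (\<forall>u\<in>verts G. \<forall>v\<in>verts G. {u, v} \<in> edges G \<longleftrightarrow> {f u, f v} \<in> edges H))"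

definition subgraph :: "'v graph \<Rightarrow> 'v graph \<Rightarrow> bool" where
  "subgraph S G \<longleftrightarrow> wf_graph S \<and> verts S \<subseteq> verts G \<and> edges S \<subseteq> edges G"

definition induced :: "'v graph \<Rightarrow> 'v set \<Rightarrow> 'v graph" where
  "induced G S = (S \<inter> verts G, {e \<in> edges G. e \<subseteq> S})"

definition clique_number :: "'v graph \<Rightarrow> nat" where
  "clique_number G = Max {card K | K. K \<subseteq> verts G \<and>
      (\<forall>u\<in>K. \<forall>v\<in>K. u \<noteq> v \<longrightarrow> {u, v} \<in> edges G)}"

text \<open>The subdivision H^(p): each edge e = {a,b} (a < b) is replaced by the path
  a = node 0, Inr(e,1), ..., Inr(e,p), node (p+1) = b of length p+1.\<close>

definition sub_node :: "nat \<Rightarrow> nat set \<Rightarrow> nat \<Rightarrow> nat + (nat set \<times> nat)" where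
  "sub_node p e i = (if i = 0 then Inl (Min e) else if i = Suc p then Inl (Max e) else Inr (e, i))"

definition subdivision :: "nat \<Rightarrow> nat graph \<Rightarrow> (nat + (nat set \<times> nat)) graph" where
  "subdivision p H =
     (Inl ` verts H \<union> {Inr (e, i) | e i. e \<in> edges H \<and> i \<in> {1..p}},
      {{sub_node p e i, sub_node p e (Suc i)} | e i. e \<in> edges H \<and> i \<le> p})"

definition graph_class :: "nat graph set \<Rightarrow> bool" where
  "graph_class C \<longleftrightarrow> (\<forall>G\<in>C. wf_graph G) \<and>
     (\<forall>G G'. G \<in> C \<longrightarrow> wf_graph G' \<longrightarrow> graph_iso G G' \<longrightarrow> G' \<in> C)"

definition hereditary :: "nat graph set \<Rightarrow> bool" where
  "hereditary C \<longleftrightarrow> graph_class C \<and> (\<forall>G\<in>C. \<forall>S. induced G S \<in> C)"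

definition hereditary_property :: "nat graph set set \<Rightarrow> bool" where
  "hereditary_property \<Pi> \<longleftrightarrow> (\<forall>C\<in>\<Pi>. hereditary C) \<and>
     (\<forall>C\<in>\<Pi>. \<forall>D. hereditary D \<longrightarrow> D \<subseteq> C \<longrightarrow> D \<in> \<Pi>)"

definition nowhere_dense :: "nat graph set \<Rightarrow> bool" where
  "nowhere_dense C \<longleftrightarrow> (\<exists>f\<omega> :: nat \<Rightarrow> nat. \<forall>p H G. G \<in> C \<longrightarrow> wf_graph H \<longrightarrow>
     (\<exists>S. subgraph S G \<and> graph_iso (subdivision p H) S) \<longrightarrow> clique_number H \<le> f\<omega> p)"

text \<open>f(n) = n^{o(1)}: for every eps > 0, eventually f(n) <= n^eps.\<close>
definition subpoly :: "(nat \<Rightarrow> nat) \<Rightarrow> bool" where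
  "subpoly f \<longleftrightarrow> (\<forall>\<epsilon>::real. \<epsilon> > 0 \<longrightarrow> (\<forall>\<^sub>F n in at_top. real (f n) \<le> real n powr \<epsilon>))"

definition has_decomposition ::
  "nat graph set set \<Rightarrow> nat graph set \<Rightarrow> (nat \<Rightarrow> nat) \<Rightarrow> nat \<Rightarrow> nat graph set \<Rightarrow> bool" where
  "has_decomposition \<Pi> C f p D \<longleftrightarrow> D \<in> \<Pi> \<and>
     (\<forall>G\<in>C. \<exists>(N::nat) (V :: nat \<Rightarrow> nat set). N \<le> f (card (verts G)) \<and>
        (\<Union>i\<in>{1..N}. V i) = verts G \<and>
        (\<forall>i\<in>{1..N}. \<forall>j\<in>{1..N}. i \<noteq> j \<longrightarrow> V i \<inter> V j = {}) \<and>
        (\<forall>\<iota> :: nat \<Rightarrow> nat. (\<forall>k\<in>{1..p}. \<iota> k \<in> {1..N}) \<longrightarrow>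
            induced G (\<Union>k\<in>{1..p}. V (\<iota> k)) \<in> D))"

definition star :: "nat graph set set \<Rightarrow> nat graph set set" where
  "star \<Pi> = {C. hereditary C \<and> (\<forall>p::nat. p > 0 \<longrightarrow>
      (\<exists>f D. mono f \<and> subpoly f \<and> has_decomposition \<Pi> C f p D))}"

definition decomposition_horizon :: "nat graph set set \<Rightarrow> bool" where
  "decomposition_horizon \<Pi> \<longleftrightarrow> hereditary_property \<Pi> \<and> star \<Pi> = \<Pi>"

end

theory Submission
  imports Defs Complex_Main
begin


lemma not_ND_unbounded:
  assumes "\<not> nowhere_dense C"
  shows "\<exists>p. \<forall>s. \<exists>G H. G \<in> C \<and> wf_graph H \<and> (\<exists>S. subgraph S G \<and> graph_iso (subdivision p H) S) \<and> s < clique_number H"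
proof (rule ccontr)
  assume A: "\<not> ?thesis"
  have ex: "\<exists>s. \<forall>G H. G \<in> C \<longrightarrow> wf_graph H \<longrightarrow> (\<exists>S. subgraph S G \<and> graph_iso (subdivision p H) S) \<longrightarrow> clique_number H \<le> s" for p
  proof -
    from A obtain s where s: "\<not> (\<exists>G H. G \<in> C \<and> wf_graph H \<and> (\<exists>S. subgraph S G \<and> graph_iso (subdivision p H) S) \<and> s < clique_number H)"
      by blast
    show ?thesis using s leI by blast
  qed
  have "\<forall>p. \<exists>s. \<forall>G H. G \<in> C \<longrightarrow> wf_graph H \<longrightarrow> (\<exists>S. subgraph S G \<and> graph_iso (subdivision p H) S) \<longrightarrow> clique_number H \<le> s"
    using ex by blast
  then obtain g where "\<forall>p. \<forall>G H. G \<in> C \<longrightarrow> wf_graph H \<longrightarrow> (\<exists>S. subgraph S G \<and> graph_iso (subdivision p H) S) \<longrightarrow> clique_number H \<le> g p"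
    by (rule choice[THEN exE])
  then have "nowhere_dense C" unfolding nowhere_dense_def by blast
  with assms show False by simp
qed

lemma clique_attained:
  assumes "wf_graph H"
  shows "\<exists>K. K \<subseteq> verts H \<and> (\<forall>u\<in>K. \<forall>v\<in>K. u \<noteq> v \<longrightarrow> {u, v} \<in> edges H) \<and> card K = clique_number H"
proof -
  define M where "M = {card K | K. K \<subseteq> verts H \<and> (\<forall>u\<in>K. \<forall>v\<in>K. u \<noteq> v \<longrightarrow> {u, v} \<in> edges H)}"
  have fin: "finite (verts H)" using assms unfolding wf_graph_def by simp
  have sub: "M \<subseteq> card ` Pow (verts H)" unfolding M_def by blast
  have f2: "finite (card ` Pow (verts H))" using fin by simp
  have finM: "finite M" using sub f2 by (rule finite_subset)
  have "card {} \<in> M" unfolding M_def by (rule CollectI, rule exI[of _ "{}"]) simp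
  then have ne: "M \<noteq> {}" by blast
  have mx: "Max M \<in> M" using finM ne by (rule Max_in)
  have exK: "\<exists>K. K \<subseteq> verts H \<and> (\<forall>u\<in>K. \<forall>v\<in>K. u \<noteq> v \<longrightarrow> {u, v} \<in> edges H) \<and> card K = x" if "x \<in> M" for x
    using that unfolding M_def by blast
  obtain K where K: "K \<subseteq> verts H" "\<forall>u\<in>K. \<forall>v\<in>K. u \<noteq> v \<longrightarrow> {u, v} \<in> edges H" "card K = Max M"
    using exK[OF mx] by blast
  have "card K = clique_number H" unfolding clique_number_def using K(3) M_def by simp
  then show ?thesis using K(1,2) by blast
qed

definition Kg :: "nat \<Rightarrow> nat graph" where
  "Kg m = ({..<m}, {e. e \<subseteq> {..<m} \<and> card e = 2})"

lemma wf_Kg: "wf_graph (Kg m)"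
  unfolding wf_graph_def Kg_def verts_def edges_def by auto

lemma clique_Kg: "m \<le> clique_number (Kg m)"
proof -
  let ?M = "{card K | K. K \<subseteq> verts (Kg m) \<and> (\<forall>u\<in>K. \<forall>v\<in>K. u \<noteq> v \<longrightarrow> {u, v} \<in> edges (Kg m))}"
  have "?M \<subseteq> card ` Pow {..<m}" by (auto simp: Kg_def verts_def)
  moreover have "finite (card ` Pow {..<m})" by simp
  ultimately have "finite ?M" by (rule finite_subset)
  moreover have "m \<in> ?M"
    by (rule CollectI, rule exI[of _ "{..<m}"]) (auto simp: Kg_def verts_def edges_def)
  ultimately show ?thesis unfolding clique_number_def by (rule Max_ge)
qed

lemma card_edges_Kg: "card (edges (Kg m)) \<le> m * m"
proof -
  have "edges (Kg m) \<subseteq> (\<lambda>(a,b). {a,b}) ` ({..<m} \<times> {..<m})"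
  proof
    fix e assume "e \<in> edges (Kg m)"
    then have e: "e \<subseteq> {..<m}" "card e = 2" by (auto simp: Kg_def edges_def)
    then obtain x y where "e = {x,y}" unfolding card_2_iff by blast
    with e(1) show "e \<in> (\<lambda>(a,b). {a,b}) ` ({..<m} \<times> {..<m})"
      by (intro rev_image_eqI[of "(x,y)"]) auto
  qed
  then have "card (edges (Kg m)) \<le> card ((\<lambda>(a,b). {a,b}) ` ({..<m} \<times> {..<m}))"
    by (intro card_mono) auto
  also have "\<dots> \<le> card ({..<m} \<times> {..<m})" by (rule card_image_le) simp
  finally have "card (edges (Kg m)) \<le> card ({..<m} \<times> {..<m})" .
  then show ?thesis by simp
qed

lemma verts_pair[simp]: "verts (a, b) = a" by (simp add: verts_def)
lemma edges_pair[simp]: "edges (a, b) = b" by (simp add: edges_def)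

lemma embed:
  fixes X :: "'a graph" and G :: "'b graph"
  assumes fin: "finite (verts X)" and ed: "\<forall>e\<in>edges X. e \<subseteq> verts X \<and> card e = 2"
    and inj: "inj_on \<psi> (verts X)" and vs: "\<psi> ` verts X \<subseteq> verts G"
    and es: "\<forall>e\<in>edges X. \<psi> ` e \<in> edges G"
  shows "subgraph (\<psi> ` verts X, (\<lambda>e. \<psi> ` e) ` edges X) G \<and> graph_iso X (\<psi> ` verts X, (\<lambda>e. \<psi> ` e) ` edges X)"
proof
  have card2: "card (\<psi> ` e) = 2" if "e \<in> edges X" for e
  proof -
    have e: "e \<subseteq> verts X" "card e = 2" using ed that by auto
    have "inj_on \<psi> e" using inj_on_subset[OF inj e(1)] .
    then show ?thesis using e(2) by (simp add: card_image)
  qed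
  have sube: "\<psi> ` e \<subseteq> \<psi> ` verts X" if "e \<in> edges X" for e
    using ed that by (intro image_mono) auto
  have wf: "wf_graph (\<psi> ` verts X, (\<lambda>e. \<psi> ` e) ` edges X)"
    unfolding wf_graph_def verts_pair edges_pair
    using fin card2 sube by auto
  show "subgraph (\<psi> ` verts X, (\<lambda>e. \<psi> ` e) ` edges X) G"
    unfolding subgraph_def verts_pair edges_pair using wf vs es
    by auto
  show "graph_iso X (\<psi> ` verts X, (\<lambda>e. \<psi> ` e) ` edges X)"
    unfolding graph_iso_def
  proof (intro exI[of _ \<psi>] conjI ballI)
    show "bij_betw \<psi> (verts X) (verts (\<psi> ` verts X, (`) \<psi> ` edges X))"
      using inj by (simp add: bij_betw_def)
    fix u v assume uv: "u \<in> verts X" "v \<in> verts X"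
    show "({u, v} \<in> edges X) = ({\<psi> u, \<psi> v} \<in> edges (\<psi> ` verts X, (`) \<psi> ` edges X))"
    proof
      assume "{u, v} \<in> edges X"
      then have "\<psi> ` {u,v} \<in> (`) \<psi> ` edges X" by (rule imageI)
      then show "{\<psi> u, \<psi> v} \<in> edges (\<psi> ` verts X, (`) \<psi> ` edges X)"
        by simp
    next
      assume "{\<psi> u, \<psi> v} \<in> edges (\<psi> ` verts X, (`) \<psi> ` edges X)"
      then obtain e where e: "e \<in> edges X" "{\<psi> u, \<psi> v} = \<psi> ` e" by auto
      have ev: "e \<subseteq> verts X" using ed e(1) by auto
      have uvs: "{u,v} \<subseteq> verts X" using uv by auto
      have "\<psi> ` {u,v} = \<psi> ` e" using e(2) by simp
      then have "{u,v} = e" using inj_on_image_eq_iff[OF inj uvs ev] by simp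
      then show "{u, v} \<in> edges X" using e(1) by simp
    qed
  qed
qed

lemma pigeon:
  assumes "finite A" "finite B" "B \<noteq> {}" "f ` A \<subseteq> B"
  shows "\<exists>b\<in>B. card A \<le> card B * card {x\<in>A. f x = b}"
proof (rule ccontr)
  assume a: "\<not> (\<exists>b\<in>B. card A \<le> card B * card {x\<in>A. f x = b})"
  have lt: "\<forall>b\<in>B. card B * card {x\<in>A. f x = b} < card A"
  proof
    fix b assume "b \<in> B"
    then have "\<not> card A \<le> card B * card {x\<in>A. f x = b}" using a by blast
    then show "card B * card {x\<in>A. f x = b} < card A" by simp
  qed
  have "A = (\<Union>b\<in>B. {x\<in>A. f x = b})" using assms(4) by auto
  then have "card A = (\<Sum>b\<in>B. card {x\<in>A. f x = b})"
    using card_UN_disjoint[of B "\<lambda>b. {x\<in>A. f x = b}"] assms by auto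
  then have "card B * card A = (\<Sum>b\<in>B. card B * card {x\<in>A. f x = b})"
    by (simp add: sum_distrib_left)
  also have "\<dots> < (\<Sum>b\<in>B. card A)"
    using lt assms by (intro sum_strict_mono) auto
  finally show False by simp
qed

lemma kst:
  fixes Nc :: "'a \<Rightarrow> 'b set"
  assumes fA: "finite A" and fA2: "finite A2" and sub: "\<forall>c\<in>A2. Nc c \<subseteq> A"
    and big: "(L - 1) * card A ^ m < (\<Sum>c\<in>A2. card (Nc c) choose m)"
  shows "\<exists>S. S \<subseteq> A \<and> card S = m \<and> L \<le> card {c\<in>A2. S \<subseteq> Nc c}"
proof (rule ccontr)
  assume a: "\<not> (\<exists>S. S \<subseteq> A \<and> card S = m \<and> L \<le> card {c\<in>A2. S \<subseteq> Nc c})"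
  have small: "card {c\<in>A2. S \<subseteq> Nc c} \<le> L - 1" if "S \<subseteq> A" "card S = m" for S
  proof -
    have "\<not> L \<le> card {c\<in>A2. S \<subseteq> Nc c}" using a that by blast
    then show ?thesis by simp
  qed
  define SS where "SS = {S. S \<subseteq> A \<and> card S = m}"
  define P where "P = (SIGMA c:A2. {S. S \<subseteq> Nc c \<and> card S = m})"
  have finNc: "finite (Nc c)" if "c \<in> A2" for c using sub that fA finite_subset by blast
  have "card P = (\<Sum>c\<in>A2. card {S. S \<subseteq> Nc c \<and> card S = m})"
    unfolding P_def using fA2 finNc by (intro card_SigmaI) auto
  also have "\<dots> = (\<Sum>c\<in>A2. card (Nc c) choose m)"
    using finNc n_subsets by (intro sum.cong) auto
  finally have cP: "card P = (\<Sum>c\<in>A2. card (Nc c) choose m)" .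
  have Psub: "P \<subseteq> (\<Union>S\<in>SS. {c\<in>A2. S \<subseteq> Nc c} \<times> {S})"
    unfolding P_def SS_def using sub by auto
  have fSS: "finite SS" unfolding SS_def using fA by simp
  have fU: "finite (\<Union>S\<in>SS. {c\<in>A2. S \<subseteq> Nc c} \<times> {S})"
    using fSS fA2 by auto
  have "card P \<le> card (\<Union>S\<in>SS. {c\<in>A2. S \<subseteq> Nc c} \<times> {S})"
    using Psub fU by (rule card_mono[rotated])
  also have "\<dots> \<le> (\<Sum>S\<in>SS. card ({c\<in>A2. S \<subseteq> Nc c} \<times> {S}))"
    using fSS by (rule card_UN_le)
  also have "\<dots> = (\<Sum>S\<in>SS. card {c\<in>A2. S \<subseteq> Nc c})"
    by (intro sum.cong refl) (simp add: card_cartesian_product)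
  also have "\<dots> \<le> (\<Sum>S\<in>SS. L - 1)" using small unfolding SS_def by (intro sum_mono) auto
  also have "\<dots> = card SS * (L - 1)" by simp
  finally have c1: "card P \<le> card SS * (L - 1)" .
  have "card SS = card A choose m" unfolding SS_def using n_subsets fA by blast
  also have "\<dots> \<le> card A ^ m"
  proof (cases "m \<le> card A")
    case True then show ?thesis by (rule binomial_le_pow)
  next
    case False then have "card A choose m = 0" using binomial_eq_0 not_le by blast
    then show ?thesis by (metis zero_le)
  qed
  finally have "card SS \<le> card A ^ m" .
  then have "card SS * (L - 1) \<le> card A ^ m * (L - 1)" by (rule mult_le_mono1)
  then have "card P \<le> (L - 1) * card A ^ m" using c1 by (metis le_trans mult.commute)
  with cP big show False by linarith
qed



lemma binom_pow: "m \<le> d \<Longrightarrow> d ^ m \<le> (d choose m) * m ^ m"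
proof -
  assume "m \<le> d"
  then have r: "(real d / real m) ^ m \<le> real (d choose m)" by (rule binomial_ge_n_over_k_pow_k)
  show ?thesis
  proof (cases "m = 0")
    case True then show ?thesis by simp
  next
    case False
    then have mp: "real m ^ m > 0" by simp
    have "real d ^ m = (real d / real m) ^ m * real m ^ m" using False by (simp add: power_divide)
    also have "\<dots> \<le> real (d choose m) * real m ^ m" using r mp by (intro mult_right_mono) auto
    finally have "real (d ^ m) \<le> real ((d choose m) * m ^ m)" by simp
    then show ?thesis by linarith
  qed
qed

lemma ineq:
  fixes a X m L :: nat and d :: "'c \<Rightarrow> nat"
  assumes fin: "finite A2" and h: "a \<le> card A2 * X" and dc: "\<forall>c\<in>A2. a - 1 \<le> d c * X"
    and m1: "1 \<le> m" and L1: "1 \<le> L" and X1: "1 \<le> X"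
    and big: "L * (2*m)^m * X^(m+1) < a"
  shows "(L-1) * a^m < (\<Sum>c\<in>A2. d c choose m)"
proof (rule ccontr)
  assume "\<not> ?thesis"
  then have sm: "(\<Sum>c\<in>A2. d c choose m) \<le> (L-1) * a^m" by simp
  have p1: "2*m \<le> (2*m)^m" using self_le_power[of "2*m" m] m1 by simp
  have "(2*m)^m * X \<le> L * (2*m)^m * X^(m+1)"
  proof -
    have "X \<le> X^(m+1)" using self_le_power[of X "m+1"] X1 by simp
    then have "(2*m)^m * X \<le> (2*m)^m * X^(m+1)" by simp
    also have "\<dots> \<le> L * ((2*m)^m * X^(m+1))" using L1 by simp
    finally show ?thesis by (simp add: mult.assoc)
  qed
  moreover have "2*m*X \<le> (2*m)^m * X" using p1 by (rule mult_le_mono1)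
  ultimately have a1: "2*m*X < a" using big by linarith
  have mX: "1 \<le> m * X" using mult_le_mono[OF m1 X1] by simp
  have tm: "a^m \<le> (d c choose m) * (2*X*m)^m" if "c \<in> A2" for c
  proof -
    have "a - 1 \<le> d c * X" using dc that by blast
    then have "2 * (a - 1) \<le> 2 * (d c * X)" by simp
    moreover have "a \<le> 2 * (a - 1)"
    proof -
      have "2*(m*X) < a" using a1 by (simp add: mult.assoc)
      then show ?thesis using mX by linarith
    qed
    ultimately have ax: "a \<le> 2*X*d c" by (simp add: mult.commute mult.left_commute)
    have "2*(m*X) \<le> d c * X + 1" using a1 \<open>a - 1 \<le> d c * X\<close> by (simp add: mult.assoc)
    have "m \<le> d c"
    proof (rule ccontr)
      assume "\<not> m \<le> d c"
      then have "d c + 1 \<le> m" by simp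
      then have "(d c + 1) * X \<le> m * X" by (rule mult_le_mono1)
      then have "d c * X + X \<le> m * X" by (simp add: algebra_simps)
      with \<open>2*(m*X) \<le> d c * X + 1\<close> mX X1 show False by linarith
    qed
    then have "d c ^ m \<le> (d c choose m) * m ^ m" by (rule binom_pow)
    then have b: "(2*X)^m * d c ^ m \<le> (2*X)^m * ((d c choose m) * m ^ m)" by (rule mult_le_mono2)
    have "a^m \<le> (2*X*d c)^m" using ax by (rule power_mono) simp
    also have "\<dots> = (2*X)^m * d c ^ m" by (simp add: power_mult_distrib)
    also have "\<dots> \<le> (2*X)^m * ((d c choose m) * m ^ m)" by (rule b)
    also have "\<dots> = (d c choose m) * (2*X*m)^m" by (simp add: power_mult_distrib)
    finally show ?thesis .
  qed
  have "card A2 * a^m \<le> (\<Sum>c\<in>A2. (d c choose m) * (2*X*m)^m)"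
    using sum_mono[of A2 "\<lambda>c. a^m", OF tm] by simp
  also have "\<dots> = (\<Sum>c\<in>A2. d c choose m) * (2*X*m)^m" by (simp add: sum_distrib_right)
  also have "\<dots> \<le> (L-1) * a^m * (2*X*m)^m" using sm by simp
  finally have s1: "card A2 * a^m \<le> (L-1) * a^m * (2*X*m)^m" .
  have "a * a^m \<le> card A2 * X * a^m" using h by simp
  also have "\<dots> = (card A2 * a^m) * X" by (simp add: mult.commute mult.left_commute)
  also have "\<dots> \<le> ((L-1) * a^m * (2*X*m)^m) * X" using s1 by (rule mult_le_mono1)
  also have "\<dots> = ((L-1) * (2*X*m)^m * X) * a^m" by (simp add: mult.commute mult.left_commute)
  finally have ka: "a * a^m \<le> ((L-1) * (2*X*m)^m * X) * a^m" .
  have "a^m > 0" using a1 by simp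
  then have "a \<le> (L-1) * (2*X*m)^m * X" using ka mult_le_cancel2 by blast
  also have "\<dots> \<le> L * (2*X*m)^m * X" by (intro mult_le_mono1) simp
  also have "\<dots> = L * (2*m)^m * X^(m+1)"
    by (simp add: power_mult_distrib mult.commute mult.left_commute)
  finally show False using big by simp
qed



lemma card2_MinMax:
  assumes "card (e::nat set) = 2"
  shows "e = {Min e, Max e}" "Min e < Max e"
proof -
  obtain x y where xy: "e = {x,y}" "x \<noteq> y" using assms unfolding card_2_iff by blast
  have mm: "Min e = min x y" "Max e = max x y" using xy by simp_all
  show "e = {Min e, Max e}" using xy(1) unfolding mm by (cases "x \<le> y") (auto simp: min_def max_def)
  show "Min e < Max e" using xy(2) unfolding mm by (cases "x \<le> y") (auto simp: min_def max_def)
qed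

lemma sub_node_in:
  assumes "wf_graph H" "e \<in> edges H" "i \<le> Suc p"
  shows "sub_node p e i \<in> verts (subdivision p H)"
proof -
  have e: "e \<subseteq> verts H" "card e = 2" using assms unfolding wf_graph_def by auto
  have mm: "Min e \<in> verts H" "Max e \<in> verts H" using e card2_MinMax[OF e(2)] by auto
  show ?thesis using assms(2,3) mm unfolding sub_node_def subdivision_def verts_pair
    by auto
qed

lemma sub_node_edge:
  assumes "e \<in> edges H" "i \<le> p"
  shows "{sub_node p e i, sub_node p e (Suc i)} \<in> edges (subdivision p H)"
  using assms unfolding subdivision_def edges_pair by blast

lemma sub_node_neq:
  assumes "card e = 2"
  shows "sub_node p e i \<noteq> sub_node p e (Suc i)"
  using card2_MinMax(2)[OF assms] unfolding sub_node_def by auto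

lemma wf_subdiv:
  assumes "wf_graph H"
  shows "finite (verts (subdivision p H))"
    "\<forall>e\<in>edges (subdivision p H). e \<subseteq> verts (subdivision p H) \<and> card e = 2"
proof -
  have fv: "finite (verts H)" and fe: "finite (edges H)" using assms unfolding wf_graph_def
    by (auto intro: finite_subset[of _ "Pow (verts H)"])
  have eq: "{Inr (e, i) | e i. e \<in> edges H \<and> i \<in> {1..p}} = (\<lambda>(e,i). Inr (e,i)) ` (edges H \<times> {1..p})"
    by auto
  have "finite {Inr (e, i) | e i. e \<in> edges H \<and> i \<in> {1..p}}"
    by (subst eq) (simp add: fe)
  then show "finite (verts (subdivision p H))" using fv unfolding subdivision_def verts_pair by simp
  show "\<forall>e\<in>edges (subdivision p H). e \<subseteq> verts (subdivision p H) \<and> card e = 2"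
  proof
    fix f assume "f \<in> edges (subdivision p H)"
    then obtain e i where ei: "f = {sub_node p e i, sub_node p e (Suc i)}" "e \<in> edges H" "i \<le> p"
      unfolding subdivision_def edges_pair by blast
    have c2: "card e = 2" using assms ei(2) unfolding wf_graph_def by auto
    have "sub_node p e i \<in> verts (subdivision p H)" "sub_node p e (Suc i) \<in> verts (subdivision p H)"
      using sub_node_in[OF assms ei(2)] ei(3) by auto
    moreover have "sub_node p e i \<noteq> sub_node p e (Suc i)" by (rule sub_node_neq[OF c2])
    ultimately show "f \<subseteq> verts (subdivision p H) \<and> card f = 2" using ei(1) by auto
  qed
qed

definition P0 :: "nat \<Rightarrow> nat \<Rightarrow> nat \<Rightarrow> nat \<Rightarrow> nat + (nat set \<times> nat)" where
  "P0 p x y k = sub_node p {x,y} (if x < y then k else Suc p - k)"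

lemma MinMax2: "Min {x::nat, y} = min x y" "Max {x, y} = max x y" by simp_all

lemma P0_0: "x \<noteq> y \<Longrightarrow> P0 p x y 0 = Inl x"
  unfolding P0_def sub_node_def MinMax2 by (cases "x < y") auto

lemma P0_end: "x \<noteq> y \<Longrightarrow> P0 p x y (Suc p) = Inl y"
  unfolding P0_def sub_node_def MinMax2 by (cases "x < y") auto

lemma P0_mid: "x \<noteq> y \<Longrightarrow> 1 \<le> k \<Longrightarrow> k \<le> p \<Longrightarrow> P0 p x y k = Inr ({x,y}, if x < y then k else Suc p - k)"
  unfolding P0_def sub_node_def by (cases "x < y") auto

lemma P0_sym: "x \<noteq> y \<Longrightarrow> k \<le> Suc p \<Longrightarrow> P0 p y x k = P0 p x y (Suc p - k)"
proof -
  assume a: "x \<noteq> y" "k \<le> Suc p"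
  have c: "{y,x} = {x,y}" by blast
  show ?thesis unfolding P0_def c using a by (cases "x < y") auto
qed

lemma P0_in:
  assumes "wf_graph H" "{x,y} \<in> edges H" "k \<le> Suc p"
  shows "P0 p x y k \<in> verts (subdivision p H)"
proof -
  have "(if x < y then k else Suc p - k) \<le> Suc p" using assms(3) by auto
  then show ?thesis unfolding P0_def by (rule sub_node_in[OF assms(1,2)])
qed

lemma P0_edge:
  assumes "x \<noteq> y" "{x,y} \<in> edges H" "k \<le> p"
  shows "{P0 p x y k, P0 p x y (Suc k)} \<in> edges (subdivision p H)"
proof (cases "x < y")
  case True
  have "{sub_node p {x,y} k, sub_node p {x,y} (Suc k)} \<in> edges (subdivision p H)"
    by (rule sub_node_edge[OF assms(2,3)])
  then show ?thesis unfolding P0_def using True by simp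
next
  case False
  have pk: "p - k \<le> p" by simp
  have e: "{sub_node p {x,y} (p - k), sub_node p {x,y} (Suc (p - k))} \<in> edges (subdivision p H)"
    by (rule sub_node_edge[OF assms(2) pk])
  have i1: "Suc (p - k) = Suc p - k" and i2: "p - k = Suc p - Suc k" using assms(3) by auto
  have c: "{sub_node p {x,y} (Suc p - k), sub_node p {x,y} (Suc p - Suc k)} =
     {sub_node p {x,y} (p - k), sub_node p {x,y} (Suc (p - k))}"
    by (simp only: i1[symmetric] i2[symmetric] insert_commute)
  show ?thesis unfolding P0_def using False e c by simp
qed



locale core =
  fixes p :: nat and H :: "nat graph" and G :: "nat graph"
    and \<phi> :: "nat + (nat set \<times> nat) \<Rightarrow> nat" and K :: "nat set"
  assumes wfH: "wf_graph H"
    and inj: "inj_on \<phi> (verts (subdivision p H))"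
    and vG: "\<phi> ` verts (subdivision p H) \<subseteq> verts G"
    and eG: "\<forall>u\<in>verts (subdivision p H). \<forall>v\<in>verts (subdivision p H).
               {u,v} \<in> edges (subdivision p H) \<longrightarrow> {\<phi> u, \<phi> v} \<in> edges G"
    and KH: "K \<subseteq> verts H" and clq: "\<forall>u\<in>K. \<forall>v\<in>K. u \<noteq> v \<longrightarrow> {u,v} \<in> edges H"
begin

definition Wr :: "(nat + (nat set \<times> nat)) set" where
  "Wr = {Inr (e, i) | e i. e \<in> edges H \<and> e \<subseteq> K \<and> i \<in> {1..p}}"

definition W where
  "W = Inl ` K \<union> Wr"

definition Pv where "Pv x y k = \<phi> (P0 p x y k)"

lemma W_sub: "W \<subseteq> verts (subdivision p H)"
  unfolding W_def Wr_def subdivision_def verts_pair using KH by blast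

lemma P0_W:
  assumes "x \<in> K" "y \<in> K" "x \<noteq> y" "k \<le> Suc p"
  shows "P0 p x y k \<in> W"
proof -
  have e: "{x,y} \<in> edges H" using clq assms by blast
  consider "k = 0" | "k = Suc p" | "1 \<le> k \<and> k \<le> p" using assms(4) by linarith
  then show ?thesis
  proof cases
    case 1 then show ?thesis using P0_0[OF assms(3)] assms(1) unfolding W_def by simp
  next
    case 2 then show ?thesis using P0_end[OF assms(3)] assms(2) unfolding W_def by simp
  next
    case 3
    then have "P0 p x y k = Inr ({x,y}, if x < y then k else Suc p - k)"
      using P0_mid[OF assms(3)] by simp
    moreover have "(if x < y then k else Suc p - k) \<in> {1..p}" using 3 by auto
    moreover have "{x,y} \<subseteq> K" using assms by simp
    ultimately show ?thesis unfolding W_def Wr_def using e by blast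
  qed
qed

lemma Pv_edge:
  assumes "x \<in> K" "y \<in> K" "x \<noteq> y" "k \<le> p"
  shows "{Pv x y k, Pv x y (Suc k)} \<in> edges G"
proof -
  have e: "{x,y} \<in> edges H" using clq assms by blast
  have "P0 p x y k \<in> verts (subdivision p H)" "P0 p x y (Suc k) \<in> verts (subdivision p H)"
    using P0_in[OF wfH e] assms(4) by auto
  moreover have "{P0 p x y k, P0 p x y (Suc k)} \<in> edges (subdivision p H)"
    by (rule P0_edge[OF assms(3) e assms(4)])
  ultimately show ?thesis unfolding Pv_def using eG by blast
qed

definition G' where "G' = induced G (\<phi> ` W)"

lemma verts_G': "verts G' = \<phi> ` W"
  unfolding G'_def induced_def verts_pair using W_sub vG by blast

lemma edges_G': "edges G' = {e \<in> edges G. e \<subseteq> \<phi> ` W}"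
  unfolding G'_def induced_def edges_pair by simp

lemma card_W: "card W \<le> card K + card K * card K * p"
proof -
  have fK: "finite K" using KH wfH unfolding wf_graph_def by (meson finite_subset)
  have "Wr \<subseteq>
        (\<lambda>(x,y,i). (Inr ({x,y},i) :: nat + (nat set \<times> nat))) ` (K \<times> K \<times> {1..p})"
  proof
    fix z assume "z \<in> Wr"
    then obtain e i where z: "z = Inr (e,i)" "e \<in> edges H" "e \<subseteq> K" "i \<in> {1..p}" unfolding Wr_def by blast
    have "card e = 2" using wfH z(2) unfolding wf_graph_def by blast
    then obtain x y where "e = {x,y}" unfolding card_2_iff by blast
    then show "z \<in> (\<lambda>(x,y,i). (Inr ({x,y},i) :: nat + (nat set \<times> nat))) ` (K \<times> K \<times> {1..p})"
      using z by (intro rev_image_eqI[of "(x,y,i)"]) auto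
  qed
  then have "card Wr \<le>
        card ((\<lambda>(x,y,i). (Inr ({x,y},i) :: nat + (nat set \<times> nat))) ` (K \<times> K \<times> {1..p}))"
    using fK by (intro card_mono) auto
  also have "\<dots> \<le> card (K \<times> K \<times> {1..p})" by (rule card_image_le) (simp add: fK)
  also have "\<dots> = card K * card K * p" by (simp add: card_cartesian_product)
  finally have c2: "card Wr \<le> card K * card K * p" .
  have "card W \<le> card (Inl ` K :: (nat + (nat set \<times> nat)) set) + card Wr"
    unfolding W_def by (rule card_Un_le)
  also have "card (Inl ` K :: (nat + (nat set \<times> nat)) set) = card K" by (simp add: card_image)
  finally show ?thesis using c2 by linarith
qed

lemma fin_W: "finite W"
  using W_sub wf_subdiv(1)[OF wfH] finite_subset by blast

lemma card_G'_upper: "card (verts G') \<le> card K + card K * card K * p"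
proof -
  have "card (verts G') \<le> card W" unfolding verts_G' by (rule card_image_le[OF fin_W])
  then show ?thesis using card_W by linarith
qed

lemma card_G'_lower: "card K \<le> card (verts G')"
proof -
  have "Inl ` K \<subseteq> W" unfolding W_def by blast
  then have "\<phi> ` Inl ` K \<subseteq> verts G'" unfolding verts_G' by blast
  moreover have "inj_on \<phi> (Inl ` K)" using inj_on_subset[OF inj] \<open>Inl ` K \<subseteq> W\<close> W_sub by blast
  then have "card (\<phi> ` Inl ` K) = card K" by (simp add: card_image)
  moreover have "finite (verts G')" unfolding verts_G' using fin_W by simp
  ultimately show ?thesis by (metis card_mono)
qed

end



locale core2 = core +
  fixes N :: nat and V :: "nat \<Rightarrow> nat set"
  assumes cover: "(\<Union>i\<in>{1..N}. V i) = verts G'"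
begin

definition part where "part v = (SOME i. i \<in> {1..N} \<and> v \<in> V i)"

lemma part: assumes "v \<in> \<phi> ` W" shows "part v \<in> {1..N} \<and> v \<in> V (part v)"
proof -
  have "v \<in> (\<Union>i\<in>{1..N}. V i)" using assms unfolding cover verts_G' .
  then have "\<exists>i. i \<in> {1..N} \<and> v \<in> V i" by (simp only: UN_iff Bex_def)
  then show ?thesis unfolding part_def by (rule someI_ex)
qed

definition col where "col x = part (\<phi> (Inl x))"

definition tau where "tau a c = map (\<lambda>k. part (Pv a c k)) [1..<Suc p]"

lemma inlW: "x \<in> K \<Longrightarrow> \<phi> (Inl x) \<in> \<phi> ` W"
  unfolding W_def by (intro imageI) simp

lemma col_in: "x \<in> K \<Longrightarrow> col x \<in> {1..N}"
  unfolding col_def using part[OF inlW] by simp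

lemma PvW: "x \<in> K \<Longrightarrow> y \<in> K \<Longrightarrow> x \<noteq> y \<Longrightarrow> k \<le> Suc p \<Longrightarrow> Pv x y k \<in> \<phi> ` W"
  unfolding Pv_def using P0_W by (intro imageI)

lemma tau_in:
  assumes "a \<in> K" "c \<in> K" "a \<noteq> c"
  shows "tau a c \<in> {xs. set xs \<subseteq> {1..N} \<and> length xs = p}"
proof -
  have "part (Pv a c k) \<in> {1..N}" if "k \<in> set [1..<Suc p]" for k
  proof -
    have "k \<le> Suc p" using that by (simp only: set_upt atLeastLessThan_iff) linarith
    then show ?thesis using part[OF PvW[OF assms]] by blast
  qed
  then have "set (tau a c) \<subseteq> {1..N}" unfolding tau_def by (simp add: image_subset_iff)
  moreover have "length (tau a c) = p" unfolding tau_def by simp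
  ultimately show ?thesis by simp
qed

lemma tau_nth:
  assumes "1 \<le> k" "k \<le> p"
  shows "tau a c ! (k - 1) = part (Pv a c k)"
proof -
  have "k - 1 < length [1..<Suc p]" using assms by simp
  moreover have "[1..<Suc p] ! (k - 1) = k" using assms by (simp del: upt_Suc)
  ultimately show ?thesis unfolding tau_def by (simp del: upt_Suc)
qed

end



lemma Kg_edge:
  assumes "e \<in> edges (Kg m)"
  shows "Min e < m" "Max e < m" "Min e < Max e" "e = {Min e, Max e}"
proof -
  have e: "e \<subseteq> {..<m}" "card e = 2" using assms by (auto simp: Kg_def)
  have mm: "e = {Min e, Max e}" "Min e < Max e" using card2_MinMax[OF e(2)] by auto
  then show "Min e < m" "Max e < m" using e(1) by auto
  show "Min e < Max e" "e = {Min e, Max e}" using mm by auto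
qed

locale emb = core2 +
  fixes \<beta> :: nat and \<sigma> :: "nat list" and S0 F :: "nat set" and u :: "nat \<Rightarrow> nat"
    and mid :: "nat set \<Rightarrow> nat" and m :: nat
  assumes S0K: "S0 \<subseteq> K" and FK: "F \<subseteq> K" and disj0: "S0 \<inter> F = {}"
    and colS: "\<forall>x\<in>S0 \<union> F. col x = \<beta>"
    and tauS: "\<forall>a\<in>S0. \<forall>c\<in>F. tau a c = \<sigma>"
    and uinj: "inj_on u {..<m}" and uS: "u ` {..<m} \<subseteq> S0"
    and minj: "inj_on mid (edges (Kg m))" and mF: "mid ` edges (Kg m) \<subseteq> F"
begin

definition \<iota> where "\<iota> k = (if k = 1 then \<beta> else \<sigma> ! (k - 2))"
definition U where "U = (\<Union>k\<in>{1..Suc p}. V (\<iota> k))"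
definition Gd where "Gd = induced G' U"

lemma inl_good: "x \<in> S0 \<union> F \<Longrightarrow> \<phi> (Inl x) \<in> \<phi> ` W \<and> \<phi> (Inl x) \<in> U"
proof -
  assume x: "x \<in> S0 \<union> F"
  then have xK: "x \<in> K" using S0K FK by blast
  have w: "\<phi> (Inl x) \<in> \<phi> ` W" by (rule inlW[OF xK])
  have "\<phi> (Inl x) \<in> V (part (\<phi> (Inl x)))" using part[OF w] by simp
  then have "\<phi> (Inl x) \<in> V (\<iota> 1)" using colS x unfolding col_def \<iota>_def by simp
  then have "\<phi> (Inl x) \<in> U" unfolding U_def by (intro UN_I[of 1]) auto
  with w show ?thesis by simp
qed

lemma good1:
  assumes x: "x \<in> S0" and y: "y \<in> F" and k: "k \<le> Suc p"
  shows "Pv x y k \<in> \<phi> ` W \<and> Pv x y k \<in> U"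
proof -
  have xy: "x \<noteq> y" using x y disj0 by blast
  have xK: "x \<in> K" and yK: "y \<in> K" using x y S0K FK by auto
  consider "k = 0" | "k = Suc p" | "1 \<le> k \<and> k \<le> p" using k by linarith
  then show ?thesis
  proof cases
    case 1 then show ?thesis unfolding Pv_def using P0_0[OF xy] inl_good x by simp
  next
    case 2 then show ?thesis unfolding Pv_def using P0_end[OF xy] inl_good y by simp
  next
    case 3
    have w: "Pv x y k \<in> \<phi> ` W" using PvW[OF xK yK xy k] .
    have "part (Pv x y k) = tau x y ! (k - 1)" using tau_nth 3 by simp
    also have "\<dots> = \<sigma> ! (k - 1)" using tauS x y by simp
    also have "\<dots> = \<iota> (Suc k)" unfolding \<iota>_def using 3 by simp
    finally have "Pv x y k \<in> V (\<iota> (Suc k))" using part[OF w] by simp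
    then have "Pv x y k \<in> U" unfolding U_def using 3 by (intro UN_I[of "Suc k"]) auto
    with w show ?thesis by simp
  qed
qed

lemma good:
  assumes "(x \<in> S0 \<and> y \<in> F) \<or> (x \<in> F \<and> y \<in> S0)" and k: "k \<le> Suc p"
  shows "Pv x y k \<in> \<phi> ` W \<and> Pv x y k \<in> U"
  using assms(1)
proof
  assume "x \<in> S0 \<and> y \<in> F" then show ?thesis using good1 k by simp
next
  assume a: "x \<in> F \<and> y \<in> S0"
  then have xy: "y \<noteq> x" using disj0 by blast
  have "Pv x y k = Pv y x (Suc p - k)" unfolding Pv_def using P0_sym[OF xy k] by simp
  moreover have "Suc p - k \<le> Suc p" by simp
  ultimately show ?thesis using good1 a by simp
qed

definition Q0 where
  "Q0 e k = (if k \<le> Suc p then P0 p (u (Min e)) (mid e) k else P0 p (mid e) (u (Max e)) (k - Suc p))"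

definition \<psi>0 where
  "\<psi>0 v = (case v of Inl i \<Rightarrow> Inl (u i) | Inr (e, k) \<Rightarrow> Q0 e k)"

definition X where "X = subdivision (2*p+1) (Kg m)"

lemma ends:
  assumes "e \<in> edges (Kg m)"
  shows "u (Min e) \<in> S0" "u (Max e) \<in> S0" "mid e \<in> F" "u (Min e) \<noteq> mid e" "mid e \<noteq> u (Max e)"
    "u (Min e) \<noteq> u (Max e)"
proof -
  show a: "u (Min e) \<in> S0" "u (Max e) \<in> S0" using uS Kg_edge[OF assms] by auto
  show c: "mid e \<in> F" using mF assms by auto
  show "u (Min e) \<noteq> mid e" "mid e \<noteq> u (Max e)" using a c disj0 by auto
  show "u (Min e) \<noteq> u (Max e)"
  proof
    assume "u (Min e) = u (Max e)"
    then have "Min e = Max e" using uinj Kg_edge[OF assms] by (auto dest: inj_onD)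
    then show False using Kg_edge[OF assms] by simp
  qed
qed

lemma Q0_sub:
  assumes e: "e \<in> edges (Kg m)" and k: "k \<le> Suc (2*p+1)"
  shows "\<psi>0 (sub_node (2*p+1) e k) = Q0 e k"
proof -
  consider "k = 0" | "k = Suc (2*p+1)" | "k \<noteq> 0 \<and> k \<noteq> Suc (2*p+1)" by blast
  then show ?thesis
  proof cases
    case 1
    then show ?thesis unfolding sub_node_def \<psi>0_def Q0_def using P0_0[OF ends(4)[OF e]] by simp
  next
    case 2
    have "Suc (2*p+1) - Suc p = Suc p" by simp
    then show ?thesis unfolding sub_node_def \<psi>0_def Q0_def using 2 P0_end[OF ends(5)[OF e]] by simp
  next
    case 3
    then show ?thesis unfolding sub_node_def \<psi>0_def by simp
  qed
qed

lemma Q0_cases: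
  assumes e: "e \<in> edges (Kg m)"
  shows "k \<le> Suc p \<Longrightarrow> \<phi> (Q0 e k) = Pv (u (Min e)) (mid e) k"
    and "Suc p \<le> k \<Longrightarrow> k \<le> Suc (2*p+1) \<Longrightarrow> \<phi> (Q0 e k) = Pv (mid e) (u (Max e)) (k - Suc p)"
proof -
  show "k \<le> Suc p \<Longrightarrow> \<phi> (Q0 e k) = Pv (u (Min e)) (mid e) k" unfolding Q0_def Pv_def by simp
  assume k: "Suc p \<le> k" "k \<le> Suc (2*p+1)"
  show "\<phi> (Q0 e k) = Pv (mid e) (u (Max e)) (k - Suc p)"
  proof (cases "k = Suc p")
    case True
    then show ?thesis unfolding Q0_def Pv_def using P0_end[OF ends(4)[OF e]] P0_0[OF ends(5)[OF e]] by simp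
  next
    case False then show ?thesis unfolding Q0_def Pv_def using k by simp
  qed
qed

lemma Q0_good:
  assumes e: "e \<in> edges (Kg m)" and k: "k \<le> Suc (2*p+1)"
  shows "\<phi> (Q0 e k) \<in> \<phi> ` W \<and> \<phi> (Q0 e k) \<in> U"
proof (cases "k \<le> Suc p")
  case True
  then show ?thesis using Q0_cases(1)[OF e True] good ends[OF e] by simp
next
  case False
  then have "Suc p \<le> k" "k - Suc p \<le> Suc p" using k by auto
  then show ?thesis using Q0_cases(2)[OF e _ k] good ends[OF e] by simp
qed

lemma Q0_edge:
  assumes e: "e \<in> edges (Kg m)" and k: "k \<le> 2*p+1"
  shows "{\<phi> (Q0 e k), \<phi> (Q0 e (Suc k))} \<in> edges G"
proof -
  have aK: "u (Min e) \<in> K" and bK: "u (Max e) \<in> K" and cK: "mid e \<in> K"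
    using ends[OF e] S0K FK by auto
  consider "k \<le> p" | "Suc p \<le> k" by linarith
  then show ?thesis
  proof cases
    case 1
    then show ?thesis using Q0_cases(1)[OF e] Pv_edge[OF aK cK ends(4)[OF e] 1] by simp
  next
    case 2
    have "k - Suc p \<le> p" using k by simp
    moreover have "Suc k - Suc p = Suc (k - Suc p)" using 2 by simp
    ultimately show ?thesis using Q0_cases(2)[OF e] 2 k Pv_edge[OF cK bK ends(5)[OF e]] by simp
  qed
qed

lemma X_verts:
  assumes "v \<in> verts X"
  shows "(\<exists>i. i < m \<and> v = Inl i) \<or> (\<exists>e k. v = Inr (e,k) \<and> e \<in> edges (Kg m) \<and> 1 \<le> k \<and> k \<le> 2*p+1)"
  using assms unfolding X_def subdivision_def verts_pair by (auto simp: Kg_def)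

lemma X_edges:
  assumes "f \<in> edges X"
  shows "\<exists>e k. f = {sub_node (2*p+1) e k, sub_node (2*p+1) e (Suc k)} \<and> e \<in> edges (Kg m) \<and> k \<le> 2*p+1"
  using assms unfolding X_def subdivision_def edges_pair by blast

definition \<psi> where "\<psi> v = \<phi> (\<psi>0 v)"

lemma psi_good:
  assumes "v \<in> verts X"
  shows "\<psi> v \<in> \<phi> ` W \<and> \<psi> v \<in> U"
  using X_verts[OF assms]
proof
  assume "\<exists>i. i < m \<and> v = Inl i"
  then obtain i where i: "i < m" "v = Inl i" by blast
  then have "u i \<in> S0" using uS by auto
  then show ?thesis unfolding \<psi>_def \<psi>0_def using i inl_good by simp
next
  assume "\<exists>e k. v = Inr (e,k) \<and> e \<in> edges (Kg m) \<and> 1 \<le> k \<and> k \<le> 2*p+1"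
  then obtain e k where ek: "v = Inr (e,k)" "e \<in> edges (Kg m)" "k \<le> 2*p+1" by blast
  then show ?thesis unfolding \<psi>_def \<psi>0_def using Q0_good[OF ek(2)] by simp
qed

lemma psi_edge:
  assumes "f \<in> edges X"
  shows "\<psi> ` f \<in> edges G \<and> \<psi> ` f \<subseteq> \<phi> ` W \<and> \<psi> ` f \<subseteq> U"
proof -
  obtain e k where ek: "f = {sub_node (2*p+1) e k, sub_node (2*p+1) e (Suc k)}" "e \<in> edges (Kg m)" "k \<le> 2*p+1"
    using X_edges[OF assms] by blast
  have img: "\<psi> ` f = {\<phi> (Q0 e k), \<phi> (Q0 e (Suc k))}"
    unfolding ek(1) \<psi>_def using Q0_sub[OF ek(2)] ek(3) by simp
  show ?thesis unfolding img using Q0_edge[OF ek(2,3)] Q0_good[OF ek(2)] ek(3) by simp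
qed

lemma P0_kinj:
  assumes "x \<noteq> y" "1 \<le> k" "k \<le> p" "1 \<le> k'" "k' \<le> p" "P0 p x y k = P0 p x y k'"
  shows "k = k'"
  using assms(6) P0_mid[OF assms(1-3)] P0_mid[OF assms(1,4,5)] assms(2-5) by (cases "x < y") auto

lemma pairSF:
  assumes "s \<in> S0" "s' \<in> S0" "c \<in> F" "c' \<in> F" "{s,c} = {s',c'}"
  shows "s = s' \<and> c = c'"
proof -
  have n1: "s \<noteq> c'" "c \<noteq> s'" using assms disj0 by auto
  have "s \<in> {s',c'}" "c \<in> {s',c'}" using assms(5) by (simp_all only: insert_iff) blast+
  then show ?thesis using n1 by simp
qed

lemma Q0_class:
  assumes e: "e \<in> edges (Kg m)" and k: "1 \<le> k" "k \<le> 2*p+1"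
  shows "k \<le> p \<Longrightarrow> Q0 e k = Inr ({u (Min e), mid e}, if u (Min e) < mid e then k else Suc p - k)"
    and "k = Suc p \<Longrightarrow> Q0 e k = Inl (mid e)"
    and "Suc p < k \<Longrightarrow> Q0 e k = Inr ({mid e, u (Max e)}, if mid e < u (Max e) then k - Suc p else Suc p - (k - Suc p))"
proof -
  show "k \<le> p \<Longrightarrow> Q0 e k = Inr ({u (Min e), mid e}, if u (Min e) < mid e then k else Suc p - k)"
    unfolding Q0_def using P0_mid[OF ends(4)[OF e] k(1)] by simp
  show "k = Suc p \<Longrightarrow> Q0 e k = Inl (mid e)"
    unfolding Q0_def using P0_end[OF ends(4)[OF e]] by simp
  assume kp: "Suc p < k"
  have "1 \<le> k - Suc p" "k - Suc p \<le> p" using kp k by auto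
  then show "Q0 e k = Inr ({mid e, u (Max e)}, if mid e < u (Max e) then k - Suc p else Suc p - (k - Suc p))"
    unfolding Q0_def using P0_mid[OF ends(5)[OF e]] kp by simp
qed

lemma Q0_inj:
  assumes e: "e \<in> edges (Kg m)" and k: "1 \<le> k" "k \<le> 2*p+1"
    and e': "e' \<in> edges (Kg m)" and k': "1 \<le> k'" "k' \<le> 2*p+1"
    and eq: "Q0 e k = Q0 e' k'"
  shows "e = e' \<and> k = k'"
proof -
  note E = ends[OF e] and E' = ends[OF e']
  note C = Q0_class[OF e k] and C' = Q0_class[OF e' k']
  have ee: "e = e'"
  proof -
    have "mid e = mid e'"
    proof -
      consider "k \<le> p" | "k = Suc p" | "Suc p < k" by linarith
      then show ?thesis
      proof cases
        case 1
        consider "k' \<le> p" | "k' = Suc p" | "Suc p < k'" by linarith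
        then show ?thesis
        proof cases
          case b1: 1
          have "{u (Min e), mid e} = {u (Min e'), mid e'}" using eq C(1)[OF 1] C'(1)[OF b1] by simp
          then show ?thesis using pairSF E E' by blast
        next
          case 2 then show ?thesis using eq C(1)[OF 1] C'(2) by simp
        next
          case 3
          have "{u (Min e), mid e} = {mid e', u (Max e')}" using eq C(1)[OF 1] C'(3)[OF 3] by simp
          then have "{u (Min e), mid e} = {u (Max e'), mid e'}" by blast
          then show ?thesis using pairSF E E' by blast
        qed
      next
        case 2
        consider "k' \<le> p" | "k' = Suc p" | "Suc p < k'" by linarith
        then show ?thesis
        proof cases
          case 1 then show ?thesis using eq C(2)[OF 2] C'(1) by simp
        next
          case b2: 2 then show ?thesis using eq C(2)[OF 2] C'(2)[OF b2] by simp
        next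
          case 3 then show ?thesis using eq C(2)[OF 2] C'(3) by simp
        qed
      next
        case 3
        consider "k' \<le> p" | "k' = Suc p" | "Suc p < k'" by linarith
        then show ?thesis
        proof cases
          case 1
          have "{mid e, u (Max e)} = {u (Min e'), mid e'}" using eq C(3)[OF 3] C'(1)[OF 1] by simp
          then have "{u (Max e), mid e} = {u (Min e'), mid e'}" by blast
          then show ?thesis using pairSF E E' by blast
        next
          case 2 then show ?thesis using eq C(3)[OF 3] C'(2) by simp
        next
          case b3: 3
          have "{mid e, u (Max e)} = {mid e', u (Max e')}" using eq C(3)[OF 3] C'(3)[OF b3] by simp
          then have "{u (Max e), mid e} = {u (Max e'), mid e'}" by blast
          then show ?thesis using pairSF E E' by blast
        qed
      qed
    qed
    then show ?thesis using minj e e' by (auto dest: inj_onD)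
  qed
  have "k = k'"
  proof -
    note C'' = Q0_class[OF e k'] 
    have eq2: "Q0 e k = Q0 e k'" using eq ee by simp
    consider "k \<le> p" | "k = Suc p" | "Suc p < k" by linarith
    then show ?thesis
    proof cases
      case 1
      consider "k' \<le> p" | "k' = Suc p" | "Suc p < k'" by linarith
      then show ?thesis
      proof cases
        case b1: 1
        have "P0 p (u (Min e)) (mid e) k = P0 p (u (Min e)) (mid e) k'"
          using eq2 1 b1 unfolding Q0_def by simp
        then show ?thesis using P0_kinj[OF E(4) k(1) 1 k'(1) b1] by simp
      next
        case 2 then show ?thesis using eq2 C(1)[OF 1] C''(2) by simp
      next
        case 3
        have "{u (Min e), mid e} = {mid e, u (Max e)}" using eq2 C(1)[OF 1] C''(3)[OF 3] by simp
        then have "{u (Min e), mid e} = {u (Max e), mid e}" by blast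
        then have "u (Min e) = u (Max e)" using pairSF E by blast
        then show ?thesis using E(6) by simp
      qed
    next
      case 2
      consider "k' \<le> p" | "k' = Suc p" | "Suc p < k'" by linarith
      then show ?thesis
      proof cases
        case 1 then show ?thesis using eq2 C(2)[OF 2] C''(1) by simp
      next
        case b2: 2 then show ?thesis using 2 by simp
      next
        case 3 then show ?thesis using eq2 C(2)[OF 2] C''(3) by simp
      qed
    next
      case 3
      consider "k' \<le> p" | "k' = Suc p" | "Suc p < k'" by linarith
      then show ?thesis
      proof cases
        case 1
        have "{mid e, u (Max e)} = {u (Min e), mid e}" using eq2 C(3)[OF 3] C''(1)[OF 1] by simp
        then have "{u (Max e), mid e} = {u (Min e), mid e}" by blast
        then have "u (Min e) = u (Max e)" using pairSF E by blast
        then show ?thesis using E(6) by simp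
      next
        case 2 then show ?thesis using eq2 C(3)[OF 3] C''(2) by simp
      next
        case b3: 3
        have "P0 p (mid e) (u (Max e)) (k - Suc p) = P0 p (mid e) (u (Max e)) (k' - Suc p)"
          using eq2 3 b3 unfolding Q0_def by simp
        moreover have "1 \<le> k - Suc p" "k - Suc p \<le> p" "1 \<le> k' - Suc p" "k' - Suc p \<le> p" using 3 b3 k k' by auto
        ultimately have "k - Suc p = k' - Suc p" using P0_kinj[OF E(5)] by blast
        then show ?thesis using 3 b3 by simp
      qed
    qed
  qed
  with ee show ?thesis by simp
qed

lemma psi0_W:
  assumes "v \<in> verts X"
  shows "\<psi>0 v \<in> W"
  using X_verts[OF assms]
proof
  assume "\<exists>i. i < m \<and> v = Inl i"
  then obtain i where i: "i < m" "v = Inl i" by blast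
  then have "u i \<in> K" using uS S0K by auto
  then show ?thesis unfolding \<psi>0_def W_def using i by simp
next
  assume "\<exists>e k. v = Inr (e,k) \<and> e \<in> edges (Kg m) \<and> 1 \<le> k \<and> k \<le> 2*p+1"
  then obtain e k where ek: "v = Inr (e,k)" "e \<in> edges (Kg m)" "k \<le> 2*p+1" by blast
  have aK: "u (Min e) \<in> K" and bK: "u (Max e) \<in> K" and cK: "mid e \<in> K"
    using ends[OF ek(2)] S0K FK by auto
  show ?thesis
  proof (cases "k \<le> Suc p")
    case True
    then show ?thesis unfolding \<psi>0_def ek(1) Q0_def using P0_W[OF aK cK ends(4)[OF ek(2)] True] by simp
  next
    case False
    then have "k - Suc p \<le> Suc p" using ek(3) by simp
    then show ?thesis unfolding \<psi>0_def ek(1) Q0_def using False P0_W[OF cK bK ends(5)[OF ek(2)]] by simp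
  qed
qed

lemma psi0_inj: "inj_on \<psi>0 (verts X)"
proof (rule inj_onI)
  fix v w assume v: "v \<in> verts X" and w: "w \<in> verts X" and eq: "\<psi>0 v = \<psi>0 w"
  have inlinr: False if i: "i < m" and ek: "e \<in> edges (Kg m)" "1 \<le> k" "k \<le> 2*p+1"
    and q: "Inl (u i) = Q0 e k" for i e k
  proof -
    consider "k \<le> p" | "k = Suc p" | "Suc p < k" by linarith
    then show False
    proof cases
      case 1 then show False using q Q0_class(1)[OF ek] by simp
    next
      case 2
      then have "u i = mid e" using q Q0_class(2)[OF ek] by simp
      moreover have "u i \<in> S0" using uS i by auto
      ultimately show False using ends(3)[OF ek(1)] disj0 by auto
    next
      case 3 then show False using q Q0_class(3)[OF ek] by simp
    qed
  qed
  show "v = w"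
    using X_verts[OF v]
  proof
    assume "\<exists>i. i < m \<and> v = Inl i"
    then obtain i where i: "i < m" "v = Inl i" by blast
    show "v = w" using X_verts[OF w]
    proof
      assume "\<exists>j. j < m \<and> w = Inl j"
      then obtain j where j: "j < m" "w = Inl j" by blast
      have "u i = u j" using eq i j unfolding \<psi>0_def by simp
      then have "i = j" using uinj i j by (auto dest: inj_onD)
      then show ?thesis using i j by simp
    next
      assume "\<exists>e k. w = Inr (e,k) \<and> e \<in> edges (Kg m) \<and> 1 \<le> k \<and> k \<le> 2*p+1"
      then obtain e k where ek: "w = Inr (e,k)" "e \<in> edges (Kg m)" "1 \<le> k" "k \<le> 2*p+1" by blast
      have "Inl (u i) = Q0 e k" using eq i ek unfolding \<psi>0_def by simp
      then show ?thesis using inlinr[OF i(1) ek(2-4)] by simp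
    qed
  next
    assume "\<exists>e k. v = Inr (e,k) \<and> e \<in> edges (Kg m) \<and> 1 \<le> k \<and> k \<le> 2*p+1"
    then obtain e k where ek: "v = Inr (e,k)" "e \<in> edges (Kg m)" "1 \<le> k" "k \<le> 2*p+1" by blast
    show "v = w" using X_verts[OF w]
    proof
      assume "\<exists>j. j < m \<and> w = Inl j"
      then obtain j where j: "j < m" "w = Inl j" by blast
      have "Inl (u j) = Q0 e k" using eq j ek unfolding \<psi>0_def by simp
      then show ?thesis using inlinr[OF j(1) ek(2-4)] by simp
    next
      assume "\<exists>e k. w = Inr (e,k) \<and> e \<in> edges (Kg m) \<and> 1 \<le> k \<and> k \<le> 2*p+1"
      then obtain e' k' where ek': "w = Inr (e',k')" "e' \<in> edges (Kg m)" "1 \<le> k'" "k' \<le> 2*p+1" by blast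
      have "Q0 e k = Q0 e' k'" using eq ek ek' unfolding \<psi>0_def by simp
      then have "e = e' \<and> k = k'" using Q0_inj[OF ek(2-4) ek'(2-4)] by simp
      then show ?thesis using ek ek' by simp
    qed
  qed
qed

lemma psi_inj: "inj_on \<psi> (verts X)"
proof -
  have "\<psi>0 ` verts X \<subseteq> verts (subdivision p H)" using psi0_W W_sub by blast
  then have "inj_on \<phi> (\<psi>0 ` verts X)" using inj_on_subset[OF inj] by blast
  then show ?thesis unfolding \<psi>_def using psi0_inj comp_inj_on[of \<psi>0 "verts X" \<phi>]
    by (simp add: comp_def)
qed

lemma verts_Gd: "verts Gd = U \<inter> \<phi> ` W"
  unfolding Gd_def induced_def verts_pair verts_G' by simp

lemma edges_Gd: "edges Gd = {f \<in> edges G. f \<subseteq> \<phi> ` W \<and> f \<subseteq> U}"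
  unfolding Gd_def induced_def edges_pair edges_G' by auto

lemma final: "\<exists>S'. subgraph S' Gd \<and> graph_iso (subdivision (2*p+1) (Kg m)) S'"
proof -
  have "subgraph (\<psi> ` verts X, (\<lambda>e. \<psi> ` e) ` edges X) Gd \<and> graph_iso X (\<psi> ` verts X, (\<lambda>e. \<psi> ` e) ` edges X)"
  proof (rule embed)
    show "finite (verts X)" unfolding X_def by (rule wf_subdiv(1)[OF wf_Kg])
    show "\<forall>e\<in>edges X. e \<subseteq> verts X \<and> card e = 2" unfolding X_def by (rule wf_subdiv(2)[OF wf_Kg])
    show "inj_on \<psi> (verts X)" by (rule psi_inj)
    show "\<psi> ` verts X \<subseteq> verts Gd" unfolding verts_Gd using psi_good by blast
    show "\<forall>e\<in>edges X. \<psi> ` e \<in> edges Gd" unfolding edges_Gd using psi_edge by blast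
  qed
  then show ?thesis unfolding X_def by blast
qed

end



lemma Npow:
  fixes N n E :: nat
  assumes le: "real N \<le> real n powr (1 / (4 * real E))" and n: "n > 0" and E: "E > 0"
  shows "N ^ (4 * E) \<le> n"
proof -
  have "real N ^ (4 * E) \<le> (real n powr (1 / (4 * real E))) ^ (4 * E)"
    using le by (intro power_mono) auto
  also have "\<dots> = real n powr (real (4 * E) * (1 / (4 * real E)))"
    using n by (intro powr_power) simp
  also have "real (4 * E) * (1 / (4 * real E)) = 1" using E by simp
  also have "real n powr 1 = real n" using n by simp
  finally have "real (N ^ (4 * E)) \<le> real n" by simp
  then show ?thesis by linarith
qed

lemma tbig:
  fixes t Kc N E n p :: nat
  assumes a1: "N ^ (4 * E) \<le> n" and a2: "n \<le> t + t * t * p" and a3: "Kc ^ 4 * (p + 1) < t"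
  shows "Kc * N ^ E < t"
proof (rule ccontr)
  assume "\<not> Kc * N ^ E < t"
  then have "t \<le> Kc * N ^ E" by simp
  then have "t ^ 4 \<le> (Kc * N ^ E) ^ 4" by (rule power_mono) simp
  also have "\<dots> = Kc ^ 4 * N ^ (4 * E)" by (simp add: power_mult_distrib power_mult mult.commute)
  also have "\<dots> \<le> Kc ^ 4 * n" using a1 by simp
  also have "\<dots> \<le> Kc ^ 4 * (t + t * t * p)" using a2 by simp
  also have "\<dots> \<le> Kc ^ 4 * (t * t + t * t * p)"
  proof -
    have "t \<le> t * t" using a3 by simp
    then show ?thesis by simp
  qed
  also have "\<dots> = (Kc ^ 4 * (p + 1)) * (t * t)" by (simp add: algebra_simps)
  finally have "(t * t) * (t * t) \<le> (Kc ^ 4 * (p + 1)) * (t * t)" by (simp add: power4_eq_xxxx mult.assoc)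
  moreover have "t * t > 0" using a3 by simp
  ultimately have "t * t \<le> Kc ^ 4 * (p + 1)" by simp
  moreover have "t \<le> t * t" using a3 by simp
  ultimately show False using a3 by linarith
qed



lemma star_ND:
  assumes "C \<in> star {C. hereditary C \<and> nowhere_dense C}"
  shows "nowhere_dense C"
proof (rule ccontr)
  assume nd: "\<not> nowhere_dense C"
  have herC: "hereditary C" using assms unfolding star_def by blast
  have dec: "\<forall>q::nat. q > 0 \<longrightarrow> (\<exists>f D. mono f \<and> subpoly f \<and> has_decomposition {C. hereditary C \<and> nowhere_dense C} C f q D)"
    using assms unfolding star_def by blast
  obtain p where unb: "\<forall>s. \<exists>G H. G \<in> C \<and> wf_graph H \<and> (\<exists>S. subgraph S G \<and> graph_iso (subdivision p H) S) \<and> s < clique_number H"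
    using not_ND_unbounded[OF nd] by blast
  have "\<exists>f D. mono f \<and> subpoly f \<and> has_decomposition {C. hereditary C \<and> nowhere_dense C} C f (Suc p) D"
    using dec by simp
  then obtain f D where sp: "subpoly f" and hd: "has_decomposition {C. hereditary C \<and> nowhere_dense C} C f (Suc p) D"
    by blast
  have Dnd: "nowhere_dense D" using hd unfolding has_decomposition_def by blast
  obtain g where g: "\<forall>p H G. G \<in> D \<longrightarrow> wf_graph H \<longrightarrow> (\<exists>S. subgraph S G \<and> graph_iso (subdivision p H) S) \<longrightarrow> clique_number H \<le> g p"
    using Dnd unfolding nowhere_dense_def by blast
  have hdG: "\<forall>G\<in>C. \<exists>(N::nat) (V :: nat \<Rightarrow> nat set). N \<le> f (card (verts G)) \<and>
        (\<Union>i\<in>{1..N}. V i) = verts G \<and>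
        (\<forall>i\<in>{1..N}. \<forall>j\<in>{1..N}. i \<noteq> j \<longrightarrow> V i \<inter> V j = {}) \<and>
        (\<forall>\<iota> :: nat \<Rightarrow> nat. (\<forall>k\<in>{1..Suc p}. \<iota> k \<in> {1..N}) \<longrightarrow>
            induced G (\<Union>k\<in>{1..Suc p}. V (\<iota> k)) \<in> D)"
    using hd unfolding has_decomposition_def by blast
  define m where "m = Suc (g (2*p+1))"
  define L where "L = m*m"
  define Kc where "Kc = L*(2*m)^m"
  define E where "E = p*(m+1)+1"
  define \<epsilon> where "\<epsilon> = 1/(4*real E)"
  have m1: "1 \<le> m" unfolding m_def by simp
  have L1: "1 \<le> L" unfolding L_def using m1 by simp
  have E0: "E > 0" unfolding E_def by simp
  have epos: "\<epsilon> > 0" unfolding \<epsilon>_def using E0 by simp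
  have "\<forall>\<^sub>F n in at_top. real (f n) \<le> real n powr \<epsilon>" using sp epos unfolding subpoly_def by blast
  then obtain n0 where n0: "\<And>n. n \<ge> n0 \<Longrightarrow> real (f n) \<le> real n powr \<epsilon>"
    unfolding eventually_at_top_linorder by blast
  define s where "s = max n0 (Kc^4*(p+1))"
  obtain G H where GH: "G \<in> C" "wf_graph H" "s < clique_number H"
    and exS: "\<exists>S. subgraph S G \<and> graph_iso (subdivision p H) S"
    using unb by blast
  then obtain S where S: "subgraph S G" "graph_iso (subdivision p H) S" by blast
  obtain \<phi> where phibij: "bij_betw \<phi> (verts (subdivision p H)) (verts S)"
    and phiadj: "\<forall>u\<in>verts (subdivision p H). \<forall>v\<in>verts (subdivision p H).
        {u, v} \<in> edges (subdivision p H) \<longleftrightarrow> {\<phi> u, \<phi> v} \<in> edges S"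
    using S(2) unfolding graph_iso_def by blast
  obtain K where K: "K \<subseteq> verts H" "\<forall>u\<in>K. \<forall>v\<in>K. u \<noteq> v \<longrightarrow> {u,v} \<in> edges H" "card K = clique_number H"
    using clique_attained[OF GH(2)] by blast
  define t where "t = card K"
  have SG: "verts S \<subseteq> verts G" "edges S \<subseteq> edges G" using S(1) unfolding subgraph_def by auto
  interpret c: core p H G \<phi> K
  proof
    show "wf_graph H" by (rule GH(2))
    show "inj_on \<phi> (verts (subdivision p H))" using phibij by (rule bij_betw_imp_inj_on)
    show "\<phi> ` verts (subdivision p H) \<subseteq> verts G" using phibij SG(1) by (simp add: bij_betw_def)
    show "\<forall>u\<in>verts (subdivision p H). \<forall>v\<in>verts (subdivision p H).
               {u,v} \<in> edges (subdivision p H) \<longrightarrow> {\<phi> u, \<phi> v} \<in> edges G"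
      using phiadj SG(2) by blast
    show "K \<subseteq> verts H" by (rule K(1))
    show "\<forall>u\<in>K. \<forall>v\<in>K. u \<noteq> v \<longrightarrow> {u,v} \<in> edges H" by (rule K(2))
  qed
  have indC: "\<forall>G\<in>C. \<forall>S. induced G S \<in> C" using herC unfolding hereditary_def by (rule conjunct2)
  have G'C: "c.G' \<in> C" unfolding c.G'_def using indC GH(1) by simp
  define n where "n = card (verts c.G')"
  have tn: "t \<le> n" unfolding t_def n_def by (rule c.card_G'_lower)
  have nt: "n \<le> t + t*t*p" unfolding t_def n_def by (rule c.card_G'_upper)
  have ts: "s < t" unfolding t_def using GH(3) K(3) by simp
  have "\<exists>(N::nat) (V :: nat \<Rightarrow> nat set). N \<le> f (card (verts c.G')) \<and>
        (\<Union>i\<in>{1..N}. V i) = verts c.G' \<and>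
        (\<forall>i\<in>{1..N}. \<forall>j\<in>{1..N}. i \<noteq> j \<longrightarrow> V i \<inter> V j = {}) \<and>
        (\<forall>\<iota> :: nat \<Rightarrow> nat. (\<forall>k\<in>{1..Suc p}. \<iota> k \<in> {1..N}) \<longrightarrow>
            induced c.G' (\<Union>k\<in>{1..Suc p}. V (\<iota> k)) \<in> D)"
    using hdG G'C by (rule bspec)
  then obtain N V where NV0: "N \<le> f (card (verts c.G')) \<and>
        (\<Union>i\<in>{1..N}. V i) = verts c.G' \<and>
        (\<forall>i\<in>{1..N}. \<forall>j\<in>{1..N}. i \<noteq> j \<longrightarrow> V i \<inter> V j = {}) \<and>
        (\<forall>\<iota> :: nat \<Rightarrow> nat. (\<forall>k\<in>{1..Suc p}. \<iota> k \<in> {1..N}) \<longrightarrow>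
            induced c.G' (\<Union>k\<in>{1..Suc p}. V (\<iota> k)) \<in> D)"
    by (elim exE)
  have NV: "N \<le> f n" "(\<Union>i\<in>{1..N}. V i) = verts c.G'"
    "\<forall>\<iota> :: nat \<Rightarrow> nat. (\<forall>k\<in>{1..Suc p}. \<iota> k \<in> {1..N}) \<longrightarrow>
            induced c.G' (\<Union>k\<in>{1..Suc p}. V (\<iota> k)) \<in> D"
    using NV0 unfolding n_def by simp_all
  interpret c2: core2 p H G \<phi> K N V
    by unfold_locales (rule NV(2))
  have fK: "finite K" using K(1) GH(2) unfolding wf_graph_def by (meson finite_subset)
  have t1: "1 \<le> t" using ts by simp
  have n0n: "n0 \<le> n" using ts tn unfolding s_def by simp
  have npos: "n > 0" using t1 tn by simp
  have "K \<noteq> {}" using t1 unfolding t_def by auto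
  then obtain x0 where "x0 \<in> K" by blast
  have N1: "1 \<le> N"
  proof (rule ccontr)
    assume "\<not> 1 \<le> N"
    then have "verts c.G' = {}" using NV(2) by simp
    then show False using c2.inlW[OF \<open>x0 \<in> K\<close>] c.verts_G' by simp
  qed
  have "real N \<le> real (f n)" using NV(1) by simp
  also have "\<dots> \<le> real n powr \<epsilon>" using n0[OF n0n] .
  finally have "N ^ (4 * E) \<le> n" unfolding \<epsilon>_def using npos E0 by (rule Npow)
  moreover have "Kc ^ 4 * (p + 1) < t" using ts unfolding s_def by simp
  ultimately have tK: "Kc * N ^ E < t" using nt by (intro tbig)
  define Lists where "Lists = {xs. set xs \<subseteq> {1..N} \<and> length xs = p}"
  have finL: "finite Lists" unfolding Lists_def by (simp add: finite_lists_length_eq)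
  have cardL: "card Lists = N ^ p" unfolding Lists_def by (simp add: card_lists_length_eq)
  have neL: "Lists \<noteq> {}"
  proof -
    have "replicate p 1 \<in> Lists" unfolding Lists_def using N1 by (cases p) auto
    then show ?thesis by blast
  qed
  have "\<exists>b\<in>{1..N}. card K \<le> card {1..N} * card {x\<in>K. c2.col x = b}"
    using fK N1 c2.col_in by (intro pigeon) auto
  then obtain \<beta> where \<beta>: "\<beta> \<in> {1..N}" "card K \<le> N * card {x\<in>K. c2.col x = \<beta>}" by auto
  define A where "A = {x\<in>K. c2.col x = \<beta>}"
  have AK: "A \<subseteq> K" unfolding A_def by blast
  have fA: "finite A" using fK AK finite_subset by blast
  have tA: "t \<le> N * card A" using \<beta>(2) unfolding t_def A_def .
  (* pigeonhole 2: for each c, the colour pattern of the paths towards c *)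
  have ex2: "\<exists>\<sigma>\<in>Lists. card (A - {c}) \<le> card Lists * card {a\<in>A - {c}. c2.tau a c = \<sigma>}" if "c \<in> A" for c
  proof (rule pigeon)
    show "finite (A - {c})" using fA by simp
    show "finite Lists" by (rule finL)
    show "Lists \<noteq> {}" by (rule neL)
    show "(\<lambda>a. c2.tau a c) ` (A - {c}) \<subseteq> Lists"
      unfolding Lists_def using c2.tau_in AK that by blast
  qed
  define \<sigma>c where "\<sigma>c c = (SOME \<sigma>. \<sigma> \<in> Lists \<and> card (A - {c}) \<le> card Lists * card {a\<in>A - {c}. c2.tau a c = \<sigma>})" for c
  have \<sigma>c: "\<sigma>c c \<in> Lists \<and> card (A - {c}) \<le> card Lists * card {a\<in>A - {c}. c2.tau a c = \<sigma>c c}" if "c \<in> A" for c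
  proof -
    have "\<exists>\<sigma>. \<sigma> \<in> Lists \<and> card (A - {c}) \<le> card Lists * card {a\<in>A - {c}. c2.tau a c = \<sigma>}"
      using ex2[OF that] by blast
    then show ?thesis unfolding \<sigma>c_def by (rule someI_ex)
  qed
  define Nc where "Nc c = {a\<in>A - {c}. c2.tau a c = \<sigma>c c}" for c
  have "\<exists>\<sigma>\<in>Lists. card A \<le> card Lists * card {c\<in>A. \<sigma>c c = \<sigma>}"
    using fA finL neL \<sigma>c by (intro pigeon) auto
  then obtain \<sigma> where \<sigma>: "\<sigma> \<in> Lists" "card A \<le> card Lists * card {c\<in>A. \<sigma>c c = \<sigma>}" by blast
  define A2 where "A2 = {c\<in>A. \<sigma>c c = \<sigma>}"
  have A2A: "A2 \<subseteq> A" unfolding A2_def by blast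
  have fA2: "finite A2" using fA A2A finite_subset by blast
  have NcA: "\<forall>c\<in>A2. Nc c \<subseteq> A" unfolding Nc_def by blast
  have NE: "N ^ E = N * (N ^ p) ^ (m + 1)" unfolding E_def power_add power_mult by simp
  have "Kc * N ^ E = N * (Kc * (N ^ p) ^ (m + 1))" unfolding NE by (simp add: mult.commute mult.left_commute)
  then have "N * (Kc * (N ^ p) ^ (m + 1)) < N * card A" using tK tA by linarith
  then have "Kc * (N ^ p) ^ (m + 1) < card A" using mult_less_cancel1 by blast
  then have bigA: "L * (2*m)^m * (N ^ p) ^ (m + 1) < card A" unfolding Kc_def by simp
  have X1: "1 \<le> N ^ p" using N1 by simp
  have "(L - 1) * card A ^ m < (\<Sum>c\<in>A2. card (Nc c) choose m)"
  proof (rule ineq[OF fA2 _ _ m1 L1 X1 bigA])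
    show "card A \<le> card A2 * N ^ p" using \<sigma>(2) cardL unfolding A2_def by (simp add: mult.commute)
    show "\<forall>c\<in>A2. card A - 1 \<le> card (Nc c) * N ^ p"
    proof
      fix c assume "c \<in> A2"
      then have cA: "c \<in> A" using A2A by blast
      have "card (A - {c}) = card A - 1" using cA fA by simp
      then show "card A - 1 \<le> card (Nc c) * N ^ p" using \<sigma>c[OF cA] cardL unfolding Nc_def
        by (simp add: mult.commute)
    qed
  qed
  then obtain S0 where S0: "S0 \<subseteq> A" "card S0 = m" "L \<le> card {c\<in>A2. S0 \<subseteq> Nc c}"
    using kst[OF fA fA2 NcA] by blast
  define F where "F = {c\<in>A2. S0 \<subseteq> Nc c}"
  have fS0: "finite S0" using S0(1) fA finite_subset by blast
  obtain u where u: "bij_betw u {0..<card S0} S0" using ex_bij_betw_nat_finite[OF fS0] by blast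
  have uinj: "inj_on u {..<m}" and uS: "u ` {..<m} \<subseteq> S0"
    using u S0(2) unfolding bij_betw_def by (auto simp: lessThan_atLeast0)
  have fF: "finite F" unfolding F_def using fA2 by simp
  have fE: "finite (edges (Kg m))" by (simp add: Kg_def)
  have "card (edges (Kg m)) \<le> card F" using card_edges_Kg[of m] S0(3) unfolding F_def L_def by linarith
  then obtain mid where mid: "mid ` edges (Kg m) \<subseteq> F" "inj_on mid (edges (Kg m))"
    using card_le_inj[OF fE fF] by blast
  interpret e: emb p H G \<phi> K N V \<beta> \<sigma> S0 F u mid m
  proof
    show "S0 \<subseteq> K" using S0(1) AK by blast
    show "F \<subseteq> K" unfolding F_def using A2A AK by blast
    show "S0 \<inter> F = {}" unfolding F_def Nc_def by blast
    show "\<forall>x\<in>S0 \<union> F. c2.col x = \<beta>" using S0(1) A2A unfolding F_def A_def by blast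
    show "\<forall>a\<in>S0. \<forall>c\<in>F. c2.tau a c = \<sigma>" unfolding F_def Nc_def A2_def by blast
    show "inj_on u {..<m}" by (rule uinj)
    show "u ` {..<m} \<subseteq> S0" by (rule uS)
    show "inj_on mid (edges (Kg m))" by (rule mid(2))
    show "mid ` edges (Kg m) \<subseteq> F" by (rule mid(1))
  qed
  have "e.Gd \<in> D"
  proof -
    have "\<forall>k\<in>{1..Suc p}. e.\<iota> k \<in> {1..N}"
    proof
      fix k assume k: "k \<in> {1..Suc p}"
      show "e.\<iota> k \<in> {1..N}"
      proof (cases "k = 1")
        case True then show ?thesis unfolding e.\<iota>_def using \<beta>(1) by simp
      next
        case False
        then have "k - 2 < length \<sigma>" using k \<sigma>(1) unfolding Lists_def by auto
        then have "\<sigma> ! (k - 2) \<in> set \<sigma>" by (rule nth_mem)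
        then show ?thesis unfolding e.\<iota>_def using False \<sigma>(1) unfolding Lists_def by auto
      qed
    qed
    then show ?thesis using NV(3) unfolding e.Gd_def e.U_def by blast
  qed
  moreover obtain S' where "subgraph S' e.Gd" "graph_iso (subdivision (2*p+1) (Kg m)) S'"
    using e.final by blast
  ultimately have "clique_number (Kg m) \<le> g (2*p+1)" using g wf_Kg by blast
  then show False using clique_Kg[of m] unfolding m_def by simp
qed



lemma wf_induced: "wf_graph G \<Longrightarrow> wf_graph (induced G S)"
  unfolding wf_graph_def induced_def verts_def edges_def by auto

lemma induced_all: "wf_graph G \<Longrightarrow> induced G (verts G) = G"
  unfolding wf_graph_def induced_def verts_def edges_def by (cases G) auto

lemma ND_sub: "nowhere_dense C \<Longrightarrow> D \<subseteq> C \<Longrightarrow> nowhere_dense D"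
  unfolding nowhere_dense_def by blast

lemma hp: "hereditary_property {C. hereditary C \<and> nowhere_dense C}"
  unfolding hereditary_property_def using ND_sub by blast

lemma subpoly_one: "subpoly (\<lambda>n. 1)"
  unfolding subpoly_def
proof (intro allI impI)
  fix e :: real assume "e > 0"
  show "\<forall>\<^sub>F n in at_top. real 1 \<le> real n powr e"
    using eventually_ge_at_top[of "1::nat"]
    by eventually_elim (simp add: ge_one_powr_ge_zero \<open>e>0\<close> less_imp_le)
qed

lemma ND_in_star:
  assumes "hereditary C" "nowhere_dense C"
  shows "C \<in> star {C. hereditary C \<and> nowhere_dense C}"
  unfolding star_def
proof (safe intro!: assms(1))
  fix p :: nat assume "p > 0"
  show "\<exists>f D. mono f \<and> subpoly f \<and> has_decomposition {C. hereditary C \<and> nowhere_dense C} C f p D"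
  proof (intro exI conjI)
    show "mono (\<lambda>n::nat. 1::nat)" by (simp add: mono_def)
    show "subpoly (\<lambda>n. 1)" by (rule subpoly_one)
    show "has_decomposition {C. hereditary C \<and> nowhere_dense C} C (\<lambda>n. 1) p C"
      unfolding has_decomposition_def
    proof (intro conjI ballI)
      show "C \<in> {C. hereditary C \<and> nowhere_dense C}" using assms by simp
      fix G assume G: "G \<in> C"
      have wf: "wf_graph G" using assms(1) G unfolding hereditary_def graph_class_def by auto
      show "\<exists>(N::nat) (V::nat \<Rightarrow> nat set). N \<le> 1 \<and> (\<Union>i\<in>{1..N}. V i) = verts G \<and>
        (\<forall>i\<in>{1..N}. \<forall>j\<in>{1..N}. i \<noteq> j \<longrightarrow> V i \<inter> V j = {}) \<and>
        (\<forall>\<iota>::nat\<Rightarrow>nat. (\<forall>k\<in>{1..p}. \<iota> k \<in> {1..N}) \<longrightarrow> induced G (\<Union>k\<in>{1..p}. V (\<iota> k)) \<in> C)"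
      proof (rule exI[of _ "1::nat"], rule exI[of _ "\<lambda>_::nat. verts G"], intro conjI allI impI)
        fix \<iota> :: "nat \<Rightarrow> nat"
        have "(\<Union>k\<in>{1..p}. verts G) = verts G" using \<open>p>0\<close> by auto
        then show "induced G (\<Union>k\<in>{1..p}. verts G) \<in> C" using induced_all[OF wf] G by simp
      qed auto
    qed
  qed
qed

theorem mainTheorem6:
  shows "decomposition_horizon {C. hereditary C \<and> nowhere_dense C}"
  unfolding decomposition_horizon_def
proof (intro conjI hp)
  show "star {C. hereditary C \<and> nowhere_dense C} = {C. hereditary C \<and> nowhere_dense C}"
  proof
    show "star {C. hereditary C \<and> nowhere_dense C} \<subseteq> {C. hereditary C \<and> nowhere_dense C}"
      using star_ND unfolding star_def by blast
    show "{C. hereditary C \<and> nowhere_dense C} \<subseteq> star {C. hereditary C \<and> nowhere_dense C}"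
      using ND_in_star by blast
  qed
qed
end
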